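(* Let $n\ge 1$, $v>0$, $p\in(0,1)$, $z>0$, and let $R_1,\dots,R_n>0$. Consider the system of equations in unknowns $a_0,b_0$: $$\frac{1-p}{p}b_0=\sum_{i=1}^n\frac{1+\frac{b_0}{a_0R_i}}{v-\frac{1}{a_0}-\frac{1}{b_0}},\qquad \frac{1}{zp}b_0-a_0=\sum_{i=1}^n\frac{1+\frac{a_0R_i}{b_0}}{v-\frac{1}{a_0}-\frac{1}{b_0}}.$$ Then this system has a unique positive solution ($a_0>0$, $b_0>0$). Moreover, with $r_1=\sum_{i=1}^n 1/R_i$, $r_2=\sum_{i=1}^n R_i$, $$D=n^2p^2z^2-2n^2pz^2+2n^2pz+n^2z^2-2n^2z+n^2-2np^2r_1z^2+2npr_1z^2+2npr_1z+p^2r_1^2z^2-4pr_1r_2z+4r_1r_2z,$$ and $$c=\frac{npz-nz+n-pr_1z+\sqrt{D}}{2z\,(np+(1-p)r_2)},$$ the positive solution is given by $c=a_0/b_0$, $$b_0=\frac{1}{v}\left(\frac{p}{1-p}\left(n+\frac{r_1}{c}\right)+1+\frac{1}{c}\right),\qquad a_0=c\,b_0.$$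
   Context: These are the Hamling equations for log odds ratios in the case where all reported variances $V_i$ equal $v$: $R_i$ are reported odds ratios, $p$ is the ratio of unexposed controls to total controls, $z$ is the ratio of total controls to total cases, and $a_0,b_0$ are the reference-group pseudo-cases and pseudo-non-cases. (Pseudo-counts at the other exposures are then $A_i=(1+a_0R_i/b_0)/(V_i-1/a_0-1/b_0)$ and $B_i=(1+b_0/(a_0R_i))/(V_i-1/a_0-1/b_0)$.) *)

theory Defs
  imports Complex_Main
begin

definition hamling_eqs :: "nat \<Rightarrow> (nat \<Rightarrow> real) \<Rightarrow> real \<Rightarrow> real \<Rightarrow> real \<Rightarrow> real \<Rightarrow> real \<Rightarrow> bool" where
  "hamling_eqs n R v p z a0 b0 \<longleftrightarrow>
     (1 - p) / p * b0 = (\<Sum>i=1..n. (1 + b0 / (a0 * R i)) / (v - 1/a0 - 1/b0)) \<and>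
     1 / (z * p) * b0 - a0 = (\<Sum>i=1..n. (1 + a0 * R i / b0) / (v - 1/a0 - 1/b0))"

definition hamling_D :: "nat \<Rightarrow> (nat \<Rightarrow> real) \<Rightarrow> real \<Rightarrow> real \<Rightarrow> real" where
  "hamling_D n R p z =
    (let r1 = (\<Sum>i=1..n. 1 / R i); r2 = (\<Sum>i=1..n. R i); m = real n in
     m^2*p^2*z^2 - 2*m^2*p*z^2 + 2*m^2*p*z + m^2*z^2 - 2*m^2*z + m^2
     - 2*m*p^2*r1*z^2 + 2*m*p*r1*z^2 + 2*m*p*r1*z + p^2*r1^2*z^2
     - 4*p*r1*r2*z + 4*r1*r2*z)"

definition hamling_c :: "nat \<Rightarrow> (nat \<Rightarrow> real) \<Rightarrow> real \<Rightarrow> real \<Rightarrow> real" where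
  "hamling_c n R p z =
    (let r1 = (\<Sum>i=1..n. 1 / R i); r2 = (\<Sum>i=1..n. R i); m = real n in
     (m*p*z - m*z + m - p*r1*z + sqrt (hamling_D n R p z)) / (2*z*(m*p + (1 - p)*r2)))"

definition hamling_b0 :: "nat \<Rightarrow> (nat \<Rightarrow> real) \<Rightarrow> real \<Rightarrow> real \<Rightarrow> real \<Rightarrow> real" where
  "hamling_b0 n R v p z =
    (let r1 = (\<Sum>i=1..n. 1 / R i); c = hamling_c n R p z in
     1 / v * (p / (1 - p) * (real n + r1 / c) + 1 + 1 / c))"

end

theory Submission
  imports Defs
begin

lemma root_unique:
  fixes A B r c :: real
  assumes A: "A > 0" and r: "r > 0" and c: "c > 0" and q: "A*c^2 + B*c - r = 0"
  shows "c = (-B + sqrt (B^2 + 4*A*r)) / (2*A)"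
proof -
  have pos: "2*A*c + B > 0"
  proof -
    have "B*c = r - A*c^2" using q by simp
    hence "(2*A*c + B)*c = A*c^2 + r" by (simp add: algebra_simps power2_eq_square)
    moreover have "A*c^2 + r > 0" using A r c by (simp add: add_pos_pos)
    ultimately show ?thesis using c by (metis zero_less_mult_pos2)
  qed
  have "(2*A*c + B)^2 = B^2 + 4*A*(A*c^2 + B*c)" by (simp add: algebra_simps power2_eq_square)
  also have "A*c^2 + B*c = r" using q by simp
  finally have "(2*A*c + B)^2 = B^2 + 4*A*r" .
  hence "sqrt (B^2 + 4*A*r) = 2*A*c + B" using pos by (metis less_imp_le real_sqrt_abs abs_of_nonneg)
  thus ?thesis using A by (simp add: field_simps)
qed

lemma root_props:
  fixes A B r :: real
  assumes A: "A > 0" and r: "r > 0"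
  defines "c \<equiv> (-B + sqrt (B^2 + 4*A*r)) / (2*A)"
  shows "c > 0" "A*c^2 + B*c - r = 0"
proof -
  have "sqrt (B^2) < sqrt (B^2 + 4*A*r)" using A r by (subst real_sqrt_less_iff) simp
  hence "B < sqrt (B^2 + 4*A*r)" by (metis real_sqrt_abs abs_ge_self order.strict_trans1)
  thus "c > 0" using A unfolding c_def by simp
  have s: "(sqrt (B^2 + 4*A*r))^2 = B^2 + 4*A*r" using A r
    by (intro real_sqrt_pow2) (simp add: add_nonneg_nonneg)
  show "A*c^2 + B*c - r = 0" unfolding c_def using A s
    by (simp add: field_simps power2_eq_square)
qed

lemma necessary:
  fixes m r1 r2 p z v a b :: real
  assumes m: "m > 0" and r1: "r1 > 0" and r2: "r2 > 0" and p0: "0 < p" and p1: "p < 1"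
    and z: "z > 0" and v: "v > 0" and a: "a > 0" and b: "b > 0"
    and E1: "(1-p)/p*b = (m + b/a*r1) / (v - 1/a - 1/b)"
    and E2: "1/(z*p)*b - a = (m + a/b*r2) / (v - 1/a - 1/b)"
  shows "z*((1-p)*r2 + p*m)*(a/b)^2 + (m*(z - p*z - 1) + z*p*r1)*(a/b) - r1 = 0"
    and "b = 1/v * (p/(1-p)*(m + r1/(a/b)) + 1 + 1/(a/b))"
proof -
  define W where "W = v - 1/a - 1/b"
  define c where "c = a/b"
  have c: "c > 0" using a b by (simp add: c_def)
  have ac: "a = c*b" using b by (simp add: c_def)
  have ba: "b/a = 1/c" using a b by (simp add: c_def)
  have W0: "W \<noteq> 0"
  proof
    assume "W = 0"
    hence "(1-p)/p*b = 0" using E1 by (simp add: W_def)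
    thus False using p0 p1 b by simp
  qed
  have E1': "(1-p)/p*b = (m + r1/c) / W" using E1 ba by (simp add: W_def)
  have E2': "1/(z*p)*b - c*b = (m + c*r2) / W" using E2 b by (simp add: W_def ac)
  have e1: "(1-p)*b*W = p*(m + r1/c)"
    using E1' W0 p0 by (simp add: field_simps)
  have e2: "(1 - z*p*c)*b*W = z*p*(m + c*r2)"
    using E2' W0 p0 z b by (simp add: field_simps)
  have "(1-p)*((1 - z*p*c)*b*W) = (1 - z*p*c)*((1-p)*b*W)" by simp
  hence "(1-p)*(z*p*(m + c*r2)) = (1 - z*p*c)*(p*(m + r1/c))" using e1 e2 by simp
  hence "(1-p)*(z*(m + c*r2)) = (1 - z*p*c)*(m + r1/c)" using p0 by simp
  hence "c*((1-p)*(z*(m + c*r2))) = c*((1 - z*p*c)*(m + r1/c))" by simp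
  also have "... = (1 - z*p*c)*(m*c + r1)" using c by (simp add: field_simps)
  finally have "c*((1-p)*(z*(m + c*r2))) = (1 - z*p*c)*(m*c + r1)" .
  thus "z*((1-p)*r2 + p*m)*(a/b)^2 + (m*(z - p*z - 1) + z*p*r1)*(a/b) - r1 = 0"
    unfolding c_def[symmetric] by (simp add: algebra_simps power2_eq_square)
  have "W = v - 1/(c*b) - 1/b" using ac W_def by simp
  hence "(1-p)*b*(v - 1/(c*b) - 1/b) = p*(m + r1/c)" using e1 by simp
  moreover have "(1-p)*b*(v - 1/(c*b) - 1/b) = (1-p)*(v*b - 1/c - 1)" using b c by (simp add: field_simps)
  ultimately have "(1-p)*(v*b - 1/c - 1) = p*(m + r1/c)" by simp
  hence "v*b = p/(1-p)*(m + r1/c) + 1/c + 1" using p1 by (simp add: field_simps)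
  hence "b = 1/v * (p/(1-p)*(m + r1/c) + 1 + 1/c)"
    using v by (simp add: field_simps)
  thus "b = 1/v * (p/(1-p)*(m + r1/(a/b)) + 1 + 1/(a/b))" by (simp add: c_def)
qed

lemma sufficient:
  fixes m r1 r2 p z v c :: real
  assumes m: "m > 0" and r1: "r1 > 0" and r2: "r2 > 0" and p0: "0 < p" and p1: "p < 1"
    and z: "z > 0" and v: "v > 0" and c: "c > 0"
    and Q: "z*((1-p)*r2 + p*m)*c^2 + (m*(z - p*z - 1) + z*p*r1)*c - r1 = 0"
  defines "b \<equiv> 1/v * (p/(1-p)*(m + r1/c) + 1 + 1/c)"
  defines "a \<equiv> c * b"
  shows "b > 0" "a > 0"
    "(1-p)/p*b = (m + b/a*r1) / (v - 1/a - 1/b)"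
    "1/(z*p)*b - a = (m + a/b*r2) / (v - 1/a - 1/b)"
proof -
  define M where "M = m + r1/c"
  have M: "M > 0" unfolding M_def using m r1 c by (intro add_pos_pos divide_pos_pos) auto
  define K where "K = p/(1-p)*M"
  have K: "K > 0" using p0 p1 m r1 c using M unfolding K_def by (intro mult_pos_pos divide_pos_pos) auto
  show bpos: "b > 0" unfolding b_def M_def[symmetric] K_def[symmetric] using K v c by (intro mult_pos_pos divide_pos_pos add_pos_pos) auto
  show "a > 0" unfolding a_def using bpos c by simp
  have vb: "v*b = K + 1 + 1/c" unfolding b_def K_def M_def using v by simp
  have W: "v - 1/a - 1/b = K/b" unfolding a_def using bpos c vb
    by (simp add: field_simps)
  have ba: "b/a = 1/c" and ab: "a/b = c" unfolding a_def using bpos c by simp_all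
  have bM: "m + b/a*r1 = M" by (simp add: ba M_def)
  show "(1-p)/p*b = (m + b/a*r1) / (v - 1/a - 1/b)"
    unfolding W bM K_def using p0 p1 M bpos by (simp add: field_simps)
  have q2: "(1 - z*p*c)*(m*c + r1) = z*c*(m + c*r2)*(1-p)"
    using Q by (simp add: algebra_simps power2_eq_square)
  have q3: "(1/(z*p) - c) * p * (m + r1/c) = (m + c*r2)*(1-p)"
  proof -
    have "(1/(z*p) - c) * p * (m + r1/c) = (1 - z*p*c)*(m*c + r1) / (z*c)"
      using z p0 c by (simp add: field_simps)
    also have "... = (m + c*r2)*(1-p)" unfolding q2 using z c by simp
    finally show ?thesis .
  qed
  have "(m + a/b*r2) / (v - 1/a - 1/b) = b*((m + c*r2)*(1-p)) / (p*(m + r1/c))"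
    unfolding W ab K_def M_def[symmetric] using p0 p1 M bpos by (simp add: field_simps)
  also have "... = b*((1/(z*p) - c) * p * (m + r1/c)) / (p*(m + r1/c))" unfolding q3 ..
  also have "... = 1/(z*p)*b - a"
    unfolding a_def M_def[symmetric] using p0 z M by (simp add: field_simps)
  finally show "1/(z*p)*b - a = (m + a/b*r2) / (v - 1/a - 1/b)" ..
qed

theorem theorem3:
  fixes n :: nat and R :: "nat \<Rightarrow> real" and v p z :: real
  assumes "n \<ge> 1" and "v > 0" and "0 < p" and "p < 1" and "z > 0"
    and "\<And>i. i \<in> {1..n} \<Longrightarrow> R i > 0"
  shows "(\<exists>!ab. fst ab > 0 \<and> snd ab > 0 \<and> hamling_eqs n R v p z (fst ab) (snd ab)) \<and>
         (\<forall>a0 b0. a0 > 0 \<and> b0 > 0 \<and> hamling_eqs n R v p z a0 b0 \<longrightarrow>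
            hamling_c n R p z = a0 / b0 \<and>
            b0 = hamling_b0 n R v p z \<and>
            a0 = hamling_c n R p z * b0)"
proof -
  note n = assms(1) and v = assms(2) and p0 = assms(3) and p1 = assms(4) and z = assms(5)
    and Rpos = assms(6)
  define r1 where "r1 = (\<Sum>i=1..n. 1 / R i)"
  define r2 where "r2 = (\<Sum>i=1..n. R i)"
  define m where "m = real n"
  have m: "m > 0" using n by (simp add: m_def)
  have ne: "{1..n} \<noteq> {}" using n by simp
  have r1: "r1 > 0" unfolding r1_def using Rpos ne by (intro sum_pos) auto
  have r2: "r2 > 0" unfolding r2_def using Rpos ne by (intro sum_pos) auto
  define A where "A = z*((1-p)*r2 + p*m)"
  define B where "B = m*(z - p*z - 1) + z*p*r1"
  have A: "A > 0" unfolding A_def using z p0 p1 r2 m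
    by (intro mult_pos_pos add_pos_pos) auto
  have cdef: "hamling_c n R p z = (-B + sqrt (B^2 + 4*A*r1)) / (2*A)"
  proof -
    have D: "hamling_D n R p z = B^2 + 4*A*r1"
      unfolding hamling_D_def Let_def r1_def[symmetric] r2_def[symmetric] m_def[symmetric] A_def B_def
      by (simp add: algebra_simps power2_eq_square)
    show ?thesis
      unfolding hamling_c_def Let_def r1_def[symmetric] r2_def[symmetric] m_def[symmetric] D
      unfolding A_def B_def by (simp add: algebra_simps)
  qed
  have b0def: "hamling_b0 n R v p z = 1/v * (p/(1-p)*(m + r1/hamling_c n R p z) + 1 + 1/hamling_c n R p z)"
    unfolding hamling_b0_def Let_def r1_def[symmetric] m_def by simp
  have eqs: "hamling_eqs n R v p z a b \<longleftrightarrow>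
      (1-p)/p*b = (m + b/a*r1) / (v - 1/a - 1/b) \<and>
      1/(z*p)*b - a = (m + a/b*r2) / (v - 1/a - 1/b)" for a b
  proof -
    have s1: "(\<Sum>i=1..n. (1 + b / (a * R i)) / (v - 1/a - 1/b)) = (m + b/a*r1) / (v - 1/a - 1/b)"
      unfolding sum_divide_distrib[symmetric] sum.distrib r1_def sum_distrib_left m_def
      by simp
    have s2: "(\<Sum>i=1..n. (1 + a * R i / b) / (v - 1/a - 1/b)) = (m + a/b*r2) / (v - 1/a - 1/b)"
      unfolding sum_divide_distrib[symmetric] sum.distrib r2_def sum_distrib_left m_def
      by (simp add: sum_divide_distrib)
    show ?thesis unfolding hamling_eqs_def s1 s2 ..
  qed
  define c where "c = hamling_c n R p z"
  have c: "c > 0" "A*c^2 + B*c - r1 = 0" unfolding c_def cdef using root_props[OF A r1] by auto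
  have nec: "hamling_c n R p z = a0 / b0 \<and> b0 = hamling_b0 n R v p z \<and> a0 = hamling_c n R p z * b0"
    if a0: "a0 > 0" and b0: "b0 > 0" and H: "hamling_eqs n R v p z a0 b0" for a0 b0
  proof -
    have E: "(1-p)/p*b0 = (m + b0/a0*r1) / (v - 1/a0 - 1/b0)"
        "1/(z*p)*b0 - a0 = (m + a0/b0*r2) / (v - 1/a0 - 1/b0)" using H eqs by auto
    note N = necessary[OF m r1 r2 p0 p1 z v a0 b0 E]
    have q: "A*(a0/b0)^2 + B*(a0/b0) - r1 = 0" using N(1) unfolding A_def B_def .
    have ab: "a0/b0 > 0" using a0 b0 by simp
    have "hamling_c n R p z = a0/b0" unfolding cdef using root_unique[OF A r1 ab q] by simp
    moreover have "a0 = a0/b0 * b0" using b0 by simp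
    ultimately show ?thesis using N(2) b0def by simp
  qed
  define bb where "bb = 1/v * (p/(1-p)*(m + r1/c) + 1 + 1/c)"
  define aa where "aa = c * bb"
  have Q: "z*((1-p)*r2 + p*m)*c^2 + (m*(z - p*z - 1) + z*p*r1)*c - r1 = 0"
    using c(2) unfolding A_def B_def .
  note S = sufficient[OF m r1 r2 p0 p1 z v c(1) Q, folded bb_def, folded aa_def]
  have ex: "fst (aa,bb) > 0 \<and> snd (aa,bb) > 0 \<and> hamling_eqs n R v p z (fst (aa,bb)) (snd (aa,bb))"
    using S eqs by simp
  have uniq: "ab = (aa,bb)" if "fst ab > 0 \<and> snd ab > 0 \<and> hamling_eqs n R v p z (fst ab) (snd ab)" for ab
  proof -
    obtain x y where xy: "ab = (x,y)" by (cases ab)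
    have "x > 0" "y > 0" "hamling_eqs n R v p z x y" using that xy by auto
    hence h1: "y = hamling_b0 n R v p z" "x = hamling_c n R p z * y" using nec by blast+
    have pa: "aa > 0" "bb > 0" "hamling_eqs n R v p z aa bb" using ex by auto
    hence h2: "bb = hamling_b0 n R v p z" "aa = hamling_c n R p z * bb" using nec by blast+
    show ?thesis unfolding xy using h1 h2 by simp
  qed
  show ?thesis using ex uniq nec by blast
qed

end
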